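(* Let $v\in[2,m-1]$ and $F\subseteq[m]\setminus\{v\}$. Then $F$ is a lower facet of $C(m,2d+1)\backslash v$ if and only if $F\cup\{y\}$ is a facet of $C([m]_{v+},2d+1)$. Dually, $F$ is an upper facet of $C(m,2d+1)\backslash v$ if and only if $F\cup\{x\}$ is a facet of $C([m]_{v+},2d+1)$.
   Context: For a finite ordered set $V$, a $(2d+1)$-subset $F\subseteq V$ is a facet of the cyclic polytope $C(V,2d+1)$ iff either every $w\in V\setminus F$ has an even number of elements of $F$ above it, or every such $w$ has an odd number (Gale's evenness criterion). Every facet of $C(m,2d+1)$ is uniquely a disjoint union of pairs $\{i,i+1\}$ of consecutive integers together with exactly one of the elements $1$ or $m$. For $v\in[2,m-1]$, the facets of the vertex figure $C(m,2d+1)\backslash v$ are the sets $F\subseteq[m]\setminus\{v\}$ with $F\cup\{v\}$ a facet of $C(m,2d+1)$; such $F$ is a lower facet of $C(m,2d+1)\backslash v$ if in this decomposition of $F\cup\{v\}$ the element $v$ is paired with $v+1$, and an upper facet if $v$ is paired with $v-1$. $[m]_{v+}=\{1,\dots,v-1,x,y,v+1,\dots,m\}$ is the ordered set with $v-1<x<y<v+1$. *)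

theory Defs
  imports Complex_Main
begin

text \<open>Gale's evenness criterion: F is a facet of the cyclic polytope C(V,k)
  (V a finite linearly ordered set, k odd).\<close>
definition cyc_facet :: "'a::linorder set \<Rightarrow> nat \<Rightarrow> 'a set \<Rightarrow> bool" where
  "cyc_facet V k F \<longleftrightarrow> F \<subseteq> V \<and> card F = k \<and>
     ((\<forall>w\<in>V - F. even (card {u\<in>F. w < u})) \<or> (\<forall>w\<in>V - F. odd (card {u\<in>F. w < u})))"

definition pair_decomp :: "nat \<Rightarrow> nat set \<Rightarrow> nat set \<Rightarrow> nat \<Rightarrow> bool" where
  "pair_decomp m G S e \<longleftrightarrow> e \<in> {1, m} \<and> S \<subseteq> {1..<m} \<and>
     (\<forall>i\<in>S. \<forall>j\<in>S. i \<noteq> j \<longrightarrow> {i, Suc i} \<inter> {j, Suc j} = {}) \<and>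
     e \<notin> (\<Union>i\<in>S. {i, Suc i}) \<and> G = insert e (\<Union>i\<in>S. {i, Suc i})"

definition vf_facet :: "nat \<Rightarrow> nat \<Rightarrow> nat \<Rightarrow> nat set \<Rightarrow> bool" where
  "vf_facet m d v F \<longleftrightarrow> F \<subseteq> {1..m} - {v} \<and> cyc_facet {1..m} (2*d+1) (insert v F)"

definition lower_facet :: "nat \<Rightarrow> nat \<Rightarrow> nat \<Rightarrow> nat set \<Rightarrow> bool" where
  "lower_facet m d v F \<longleftrightarrow> vf_facet m d v F \<and>
     (\<exists>S e. pair_decomp m (insert v F) S e \<and> v \<in> S)"

definition upper_facet :: "nat \<Rightarrow> nat \<Rightarrow> nat \<Rightarrow> nat set \<Rightarrow> bool" where
  "upper_facet m d v F \<longleftrightarrow> vf_facet m d v F \<and>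
     (\<exists>S e. pair_decomp m (insert v F) S e \<and> v - 1 \<in> S)"

text \<open>[m]_{v+} realised inside the reals, with v-1 < x < y < v+1.\<close>
definition vplus :: "nat \<Rightarrow> nat \<Rightarrow> real \<Rightarrow> real \<Rightarrow> real set" where
  "vplus m v x y = real ` ({1..m} - {v}) \<union> {x, y}"

end

theory Submission
  imports Defs
begin

definition cnt :: "nat set \<Rightarrow> nat \<Rightarrow> nat" where
  "cnt G w = card {u\<in>G. w < u}"

lemma gale_iff:
  "cyc_facet V k F \<longleftrightarrow> F \<subseteq> V \<and> card F = k \<and> (\<exists>P. \<forall>w\<in>V-F. even (card {u\<in>F. w<u}) = P)"
  unfolding cyc_facet_def by blast

lemma cnt_step:
  assumes "finite G"
  shows "cnt G a = cnt G (Suc a) + (if Suc a \<in> G then 1 else 0)"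
proof (cases "Suc a \<in> G")
  case True
  have "{u\<in>G. a < u} = insert (Suc a) {u\<in>G. Suc a < u}" using True by auto
  then show ?thesis using True assms unfolding cnt_def by simp
next
  case False
  have "{u\<in>G. a < u} = {u\<in>G. Suc a < u}"
  proof (intro Collect_cong conj_cong refl)
    fix u assume "u \<in> G"
    then have "u \<noteq> Suc a" using False by auto
    then show "a < u \<longleftrightarrow> Suc a < u" by arith
  qed
  then show ?thesis using False unfolding cnt_def by simp
qed

lemma decomp_sub:
  assumes "pair_decomp m G S e"
  shows "S \<subseteq> G" "\<And>i. i \<in> S \<Longrightarrow> Suc i \<in> G" "e \<in> G" "finite S"
  using assms unfolding pair_decomp_def
  by (auto intro: finite_subset[OF _ finite_atLeastLessThan])

lemma decomp_count:
  assumes D: "pair_decomp m G S e" and nw: "\<forall>i\<in>S. w \<noteq> Suc i"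
  shows "cnt G w = (if w < e then 1 else 0) + (if w \<in> S then 1 else 0) + 2 * card {i\<in>S. w < i}"
proof -
  have e: "e \<in> {1, m}" and Ssub: "S \<subseteq> {1..<m}"
    and dis: "\<forall>i\<in>S. \<forall>j\<in>S. i \<noteq> j \<longrightarrow> {i, Suc i} \<inter> {j, Suc j} = {}"
    and en: "e \<notin> (\<Union>i\<in>S. {i, Suc i})" and G: "G = insert e (\<Union>i\<in>S. {i, Suc i})"
    using D unfolding pair_decomp_def by auto
  have fS: "finite S" using Ssub by (rule finite_subset) simp
  define A where "A = (if w < e then {e} else {})"
  define B where "B = (if w \<in> S then {Suc w} else {})"
  define C where "C = (\<Union>i\<in>{i\<in>S. w < i}. {i, Suc i})"
  have eq: "{u\<in>G. w < u} = A \<union> B \<union> C"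
  proof
    show "{u\<in>G. w < u} \<subseteq> A \<union> B \<union> C"
    proof
      fix u assume u: "u \<in> {u\<in>G. w < u}"
      then have "u = e \<or> (\<exists>i\<in>S. u = i \<or> u = Suc i)" using G by auto
      then show "u \<in> A \<union> B \<union> C"
      proof
        assume "u = e" then show ?thesis using u A_def by auto
      next
        assume "\<exists>i\<in>S. u = i \<or> u = Suc i"
        then obtain i where i: "i \<in> S" "u = i \<or> u = Suc i" by blast
        show ?thesis
        proof (cases "w < i")
          case True then show ?thesis using i C_def by auto
        next
          case False
          then have "u = Suc i" "i = w" using i u by auto
          then show ?thesis using i B_def by auto
        qed
      qed
    qed
    show "A \<union> B \<union> C \<subseteq> {u\<in>G. w < u}"
      using G unfolding A_def B_def C_def by auto
  qed
  have fC: "finite C" using fS unfolding C_def by auto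
  have cardC: "card C = 2 * card {i\<in>S. w < i}"
  proof -
    have "card C = (\<Sum>i\<in>{i\<in>S. w < i}. card {i, Suc i})"
      unfolding C_def
      by (rule card_UN_disjoint) (use fS dis in auto)
    also have "\<dots> = (\<Sum>i\<in>{i\<in>S. w < i}. 2)" by simp
    finally show ?thesis by simp
  qed
  have dAB: "A \<inter> B = {}" using en unfolding A_def B_def by auto
  have dAC: "A \<inter> C = {}" using en unfolding A_def C_def by auto
  have dBC: "B \<inter> C = {}"
  proof -
    { fix i assume i: "i \<in> S" "w < i" "w \<in> S" "Suc w \<in> {i, Suc i}"
      then have "i = Suc w" by auto
      moreover have "{w, Suc w} \<inter> {i, Suc i} = {}" by (rule dis[rule_format]) (use i \<open>i = Suc w\<close> in auto)
      ultimately have False by simp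
    }
    then show ?thesis unfolding B_def C_def by auto
  qed
  have "card (A \<union> B \<union> C) = card A + card B + card C"
    using dAB dAC dBC fC
    by (simp add: card_Un_disjoint A_def B_def Int_Un_distrib2)
  then show ?thesis unfolding cnt_def eq A_def B_def cardC by simp
qed

lemma construct:
  assumes Gm: "G \<subseteq> {1..m}" and cG: "card G = Suc (2*d)" and m1: "1 \<le> m"
    and par: "\<forall>w\<in>{1..m}-G. even (cnt G w) = P"
  shows "pair_decomp m G {g\<in>G. g<m \<and> odd (cnt G g) = P} (if P then 1 else m)"
proof -
  define S where "S = {g\<in>G. g<m \<and> odd (cnt G g) = P}"
  define e where "e = (if P then 1 else (m::nat))"
  have fG: "finite G" using Gm finite_subset by blast
  have ctop: "cnt G a = 0" if "m \<le> a" for a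
  proof -
    have "{u\<in>G. a < u} = {}" using Gm that by auto
    then show ?thesis unfolding cnt_def by (metis card.empty)
  qed
  have K: "Suc g \<in> G \<and> cnt G g = Suc (cnt G (Suc g))" if g: "g \<in> S" for g
  proof -
    have gG: "g \<in> G" "g < m" "odd (cnt G g) = P" using g S_def by auto
    have "Suc g \<in> G"
    proof (rule ccontr)
      assume n: "Suc g \<notin> G"
      then have "Suc g \<in> {1..m} - G" using gG by auto
      then have "even (cnt G (Suc g)) = P" using par by blast
      moreover have "cnt G g = cnt G (Suc g)" using cnt_step[OF fG, of g] n by simp
      ultimately show False using gG by simp
    qed
    then show ?thesis using cnt_step[OF fG, of g] by simp
  qed
  have cnt1: "cnt G 1 = 2*d" if "1 \<in> G"
  proof -
    have "{u\<in>G. 1 < u} = G - {1}" using Gm by auto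
    then show ?thesis unfolding cnt_def using that fG cG by simp
  qed
  have eG: "e \<in> G"
  proof (cases P)
    case True
    show ?thesis
    proof (rule ccontr)
      assume n: "e \<notin> G"
      then have n1: "1 \<notin> G" using True e_def by simp
      then have "1 \<in> {1..m} - G" using m1 by auto
      then have "even (cnt G 1)" using par True by blast
      moreover have "\<forall>u\<in>G. 1 < u" using Gm n1
        by (metis atLeastAtMost_iff le_neq_implies_less subsetD)
      then have "{u\<in>G. 1 < u} = G" by auto
      ultimately show False using cG unfolding cnt_def by simp
    qed
  next
    case False
    show ?thesis
    proof (rule ccontr)
      assume n: "e \<notin> G"
      then have "m \<in> {1..m} - G" using False e_def m1 by simp
      then have "even (cnt G m) = P" using par by blast
      then show False using ctop[of m] False by simp
    qed
  qed
  have SG: "S \<subseteq> G" unfolding S_def by auto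
  have dis: "\<forall>i\<in>S. \<forall>j\<in>S. i \<noteq> j \<longrightarrow> {i, Suc i} \<inter> {j, Suc j} = {}"
  proof (intro ballI impI)
    fix i j assume ij: "i \<in> S" "j \<in> S" "i \<noteq> j"
    have n1: "j \<noteq> Suc i"
    proof
      assume "j = Suc i"
      then have "cnt G i = Suc (cnt G j)" using K[OF ij(1)] by simp
      moreover have "odd (cnt G i) = P" "odd (cnt G j) = P" using ij S_def by auto
      ultimately show False by simp
    qed
    have n2: "i \<noteq> Suc j"
    proof
      assume "i = Suc j"
      then have "cnt G j = Suc (cnt G i)" using K[OF ij(2)] by simp
      moreover have "odd (cnt G i) = P" "odd (cnt G j) = P" using ij S_def by auto
      ultimately show False by simp
    qed
    show "{i, Suc i} \<inter> {j, Suc j} = {}" using ij(3) n1 n2 by auto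
  qed
  have en: "e \<notin> (\<Union>i\<in>S. {i, Suc i})"
  proof
    assume "e \<in> (\<Union>i\<in>S. {i, Suc i})"
    then obtain i where i: "i \<in> S" "e = i \<or> e = Suc i" by blast
    show False
    proof (cases P)
      case True
      then have e1: "e = 1" using e_def by simp
      have "i \<ge> 1" using i SG Gm by auto
      then have "i = 1" using i e1 by auto
      then have "odd (cnt G 1)" "1 \<in> G" using i S_def True by auto
      then show False using cnt1 by simp
    next
      case False
      then have em: "e = m" using e_def by simp
      have "i < m" using i S_def by auto
      then have "m = Suc i" using i em by auto
      then have "cnt G i = 1" using K[OF i(1)] ctop[of m] by simp
      then show False using i S_def False by auto
    qed
  qed
  have Geq: "G = insert e (\<Union>i\<in>S. {i, Suc i})"
  proof
    show "insert e (\<Union>i\<in>S. {i, Suc i}) \<subseteq> G" using eG SG K by auto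
    show "G \<subseteq> insert e (\<Union>i\<in>S. {i, Suc i})"
    proof
      fix h assume hG: "h \<in> G"
      show "h \<in> insert e (\<Union>i\<in>S. {i, Suc i})"
      proof (cases "h = e")
        case True then show ?thesis by simp
      next
        case hne: False
        show ?thesis
        proof (cases "odd (cnt G h) = P")
          case True
          have "h < m"
          proof (rule ccontr)
            assume "\<not> h < m"
            then have "h = m" using hG Gm by force
            then have "\<not> P" using True ctop[of m] by simp
            then show False using hne e_def \<open>h = m\<close> by simp
          qed
          then have "h \<in> S" using hG True S_def by simp
          then show ?thesis by blast
        next
          case False
          have h1: "h \<noteq> 1"
          proof
            assume h1: "h = 1"
            show False
            proof (cases P)
              case True then show False using hne h1 e_def by simp
            next
              case nP: False
              have "even (cnt G 1)" using cnt1 hG h1 by simp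
              then show False using False h1 nP by simp
            qed
          qed
          then have h2: "h \<ge> 2" using hG Gm by force
          then have hs: "Suc (h - 1) = h" by simp
          have hm1: "h - 1 \<in> G"
          proof (rule ccontr)
            assume n: "h - 1 \<notin> G"
            then have "h - 1 \<in> {1..m} - G" using h2 hG Gm by auto
            then have "even (cnt G (h-1)) = P" using par by blast
            moreover have "cnt G (h-1) = Suc (cnt G h)" using cnt_step[OF fG, of "h-1"] hs hG by simp
            ultimately show False using False by simp
          qed
          have "cnt G (h-1) = Suc (cnt G h)" using cnt_step[OF fG, of "h-1"] hs hG by simp
          moreover have "h - 1 < m" using hG Gm h2 by auto
          ultimately have "h - 1 \<in> S" using hm1 False S_def by auto
          moreover have "h \<in> {h - 1, Suc (h - 1)}" using hs by simp
          ultimately show ?thesis by blast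
        qed
      qed
    qed
  qed
  have Ssub: "S \<subseteq> {1..<m}" using SG Gm S_def by auto
  have e1m: "e \<in> {1, m}" using e_def by simp
  have "pair_decomp m G S e"
    unfolding pair_decomp_def using dis en Geq Ssub e1m by blast
  then show ?thesis unfolding S_def e_def .
qed

lemma nat_between:
  fixes t :: real
  assumes "real v - 1 < t" "t < real v + 1" "t = real i"
  shows "i = v"
proof -
  have "real v < real (i+1)" "real i < real (v+1)" using assms by auto
  then have "v < i + 1" "i < v + 1" by (simp_all only: of_nat_less_iff)
  then show ?thesis by simp
qed

lemma nat_below:
  fixes t :: real
  assumes "real v - 1 < t" "t < real v + 1" "i \<noteq> v"
  shows "real i < t \<longleftrightarrow> i < v"
proof (cases "i < v")
  case True
  then have "i + 1 \<le> v" by simp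
  then have "real i + 1 \<le> real v" by (metis of_nat_1 of_nat_add of_nat_le_iff)
  then show ?thesis using assms True by simp
next
  case False
  then have "v + 1 \<le> i" using assms by simp
  then have "real v + 1 \<le> real i" by (metis of_nat_1 of_nat_add of_nat_le_iff)
  then show ?thesis using assms False by simp
qed

lemma real_side:
  fixes z z' :: real
  assumes v: "v \<in> {1..m}" and zb: "real v - 1 < z" "z < real v + 1"
    and z'b: "real v - 1 < z'" "z' < real v + 1" and zz: "z \<noteq> z'"
    and F: "F \<subseteq> {1..m} - {v}"
  shows "cyc_facet (real ` ({1..m} - {v}) \<union> {z, z'}) k (insert z (real ` F)) \<longleftrightarrow>
    card (insert v F) = k \<and> (\<exists>P. (\<forall>w\<in>{1..m} - insert v F. even (cnt (insert v F) w) = P)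
      \<and> even (cnt (insert v F) v + (if z' < z then 1 else 0)) = P)"
proof -
  define G where "G = insert v F"
  define g where "g = (\<lambda>u. if u = v then z else real u)"
  define V where "V = real ` ({1..m} - {v}) \<union> {z, z'}"
  have Gm: "G \<subseteq> {1..m}" using v F G_def by auto
  have fG: "finite G" using Gm finite_subset by blast
  have vG: "v \<in> G" using G_def by simp
  have inj: "inj_on g G"
  proof (rule inj_onI)
    fix a b assume ab: "a \<in> G" "b \<in> G" "g a = g b"
    show "a = b"
    proof (cases "a = v"; cases "b = v")
      assume "a = v" "b \<noteq> v"
      then have "z = real b" using ab g_def by simp
      then show ?thesis using nat_between[OF zb] \<open>b \<noteq> v\<close> by blast
    next
      assume "a \<noteq> v" "b = v"
      then have "z = real a" using ab g_def by simp
      then show ?thesis using nat_between[OF zb] \<open>a \<noteq> v\<close> by blast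
    next
      assume "a \<noteq> v" "b \<noteq> v"
      then show ?thesis using ab g_def by simp
    qed simp
  qed
  have img: "insert z (real ` F) = g ` G"
  proof -
    have "g ` F = real ` F" by (rule image_cong[OF refl]) (use F g_def in auto)
    moreover have "g v = z" by (simp add: g_def)
    ultimately show ?thesis by (simp add: G_def)
  qed
  have sub: "g ` G \<subseteq> V" using F G_def g_def V_def by auto
  have diff: "V - g ` G = real ` ({1..m} - G) \<union> {z'}"
  proof
    show "V - g ` G \<subseteq> real ` ({1..m} - G) \<union> {z'}"
    proof
      fix t assume t: "t \<in> V - g ` G"
      then have "t \<in> real ` ({1..m} - {v}) \<or> t = z \<or> t = z'" using V_def by auto
      moreover have "t \<noteq> z" using t vG g_def by auto
      moreover have "t \<notin> real ` F" using t G_def g_def F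
        by (smt (verit) DiffE Diff_insert_absorb F g_def image_iff insertCI subset_Diff_insert)
      ultimately show "t \<in> real ` ({1..m} - G) \<union> {z'}" using G_def by auto
    qed
    show "real ` ({1..m} - G) \<union> {z'} \<subseteq> V - g ` G"
    proof
      fix t assume t: "t \<in> real ` ({1..m} - G) \<union> {z'}"
      have tV: "t \<in> V" using t V_def vG by auto
      have "t \<notin> g ` G"
      proof
        assume "t \<in> g ` G"
        then obtain u where u: "u \<in> G" "t = g u" by blast
        show False
        proof (cases "t = z'")
          case True
          then show False using u zz g_def nat_between[OF z'b] by (cases "u = v") auto
        next
          case False
          then obtain i where i: "i \<in> {1..m} - G" "t = real i" using t by auto
          show False
          proof (cases "u = v")
            case True
            then have "z = real i" using u i g_def by simp
            then show False using nat_between[OF zb] i vG by blast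
          next
            case False
            then show False using u i g_def by simp
          qed
        qed
      qed
      then show "t \<in> V - g ` G" using tV by blast
    qed
  qed
  have cardimg: "card {t\<in>g ` G. Q t} = card {u\<in>G. Q (g u)}" for Q
  proof -
    have "{t\<in>g ` G. Q t} = g ` {u\<in>G. Q (g u)}" by auto
    then show ?thesis using card_image[OF inj_on_subset[OF inj]] by simp
  qed
  have ci: "{u\<in>G. real i < g u} = {u\<in>G. i < u}" if i: "i \<in> {1..m} - G" for i
  proof -
    have iv: "i \<noteq> v" using i vG by auto
    show ?thesis
    proof (intro Collect_cong conj_cong refl)
      fix u assume "u \<in> G"
      show "real i < g u \<longleftrightarrow> i < u"
        using nat_below[OF zb iv] iv g_def by (cases "u = v") auto
    qed
  qed
  have cz: "{u\<in>G. z' < g u} = (if z' < z then {v} else {}) \<union> {u\<in>G. v < u}"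
  proof -
    have "z' < g u \<longleftrightarrow> (u = v \<and> z' < z) \<or> v < u" if "u \<in> G" for u
    proof (cases "u = v")
      case True then show ?thesis using g_def by simp
      next
      case False
      have "real u < z' \<longleftrightarrow> u < v" using nat_below[OF z'b False] .
      moreover have "real u \<noteq> z'" using nat_between[OF z'b] False by metis
      ultimately show ?thesis using False g_def by auto
    qed
    then show ?thesis using vG by auto
  qed
  have cz2: "card {u\<in>G. z' < g u} = cnt G v + (if z' < z then 1 else 0)"
    unfolding cz cnt_def using fG by auto
  have gale: "cyc_facet V k (g ` G) \<longleftrightarrow> card G = k \<and>
      (\<exists>P. \<forall>w\<in>real ` ({1..m} - G) \<union> {z'}. even (card {u\<in>g ` G. w<u}) = P)"
    unfolding gale_iff diff using sub card_image[OF inj] by simp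
  have "(\<forall>w\<in>real ` ({1..m} - G) \<union> {z'}. even (card {u\<in>g ` G. w<u}) = P) \<longleftrightarrow>
      (\<forall>w\<in>{1..m} - G. even (cnt G w) = P) \<and> even (cnt G v + (if z' < z then 1 else 0)) = P" for P
    unfolding cardimg using ci cz2 by (auto simp: cnt_def)
  then show ?thesis using gale unfolding V_def[symmetric] img[symmetric] G_def[symmetric] by simp
qed

lemma decomp_par:
  assumes D: "pair_decomp m G S e" and Gm: "G \<subseteq> {1..m}" and m1: "1 < m"
  shows "\<forall>w\<in>{1..m}-G. even (cnt G w) = (e \<noteq> m)"
proof
  fix w assume w: "w \<in> {1..m} - G"
  have "\<forall>i\<in>S. w \<noteq> Suc i" using decomp_sub(2)[OF D] w by auto
  moreover have "w \<notin> S" using decomp_sub(1)[OF D] w by auto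
  ultimately have c: "cnt G w = (if w < e then 1 else 0) + 2 * card {i\<in>S. w < i}"
    using decomp_count[OF D] by simp
  have e: "e = 1 \<or> e = m" "e \<in> G" using D decomp_sub(3)[OF D] unfolding pair_decomp_def by auto
  show "even (cnt G w) = (e \<noteq> m)"
  proof (cases "e = m")
    case True
    then have "w < e" using w e by (metis DiffE atLeastAtMost_iff le_neq_implies_less)
    then show ?thesis using c True by simp
  next
    case False
    then have "\<not> w < e" using w e by auto
    then show ?thesis using c False by simp
  qed
qed

theorem lemma4p7:
  fixes m d v :: nat and F :: "nat set" and x y :: real
  assumes "2 \<le> v" and "v \<le> m - 1"
    and "real v - 1 < x" and "x < y" and "y < real v + 1"
    and "F \<subseteq> {1..m} - {v}"
  shows "(lower_facet m d v F \<longleftrightarrow> cyc_facet (vplus m v x y) (2*d+1) (insert y (real ` F)))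
       \<and> (upper_facet m d v F \<longleftrightarrow> cyc_facet (vplus m v x y) (2*d+1) (insert x (real ` F)))"
proof -
  define G where "G = insert v F"
  have vm: "v \<in> {1..m}" "v < m" "1 < m" using assms by auto
  have Gm: "G \<subseteq> {1..m}" using vm assms(6) G_def by auto
  have fG: "finite G" using Gm finite_subset by blast
  have vG: "v \<in> G" using G_def by simp
  have xb: "real v - 1 < x" "x < real v + 1" and yb: "real v - 1 < y" "y < real v + 1"
    using assms by auto
  have RY: "cyc_facet (vplus m v x y) (2*d+1) (insert y (real ` F)) \<longleftrightarrow>
    card G = 2*d+1 \<and> (\<exists>P. (\<forall>w\<in>{1..m} - G. even (cnt G w) = P) \<and> even (cnt G v + 1) = P)"
  proof -
    have "vplus m v x y = real ` ({1..m} - {v}) \<union> {y, x}" unfolding vplus_def by auto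
    then show ?thesis using real_side[OF vm(1) yb xb _ assms(6), of "2*d+1"] assms(4) G_def by simp
  qed
  have RX: "cyc_facet (vplus m v x y) (2*d+1) (insert x (real ` F)) \<longleftrightarrow>
    card G = 2*d+1 \<and> (\<exists>P. (\<forall>w\<in>{1..m} - G. even (cnt G w) = P) \<and> even (cnt G v) = P)"
  proof -
    have "vplus m v x y = real ` ({1..m} - {v}) \<union> {x, y}" unfolding vplus_def by auto
    then show ?thesis using real_side[OF vm(1) xb yb _ assms(6), of "2*d+1"] assms(4) G_def by simp
  qed
  have VF: "vf_facet m d v F \<longleftrightarrow> card G = 2*d+1 \<and> (\<exists>P. \<forall>w\<in>{1..m} - G. even (cnt G w) = P)"
    unfolding vf_facet_def gale_iff cnt_def using assms(6) Gm G_def by simp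
  have L: "lower_facet m d v F \<longleftrightarrow> cyc_facet (vplus m v x y) (2*d+1) (insert y (real ` F))"
  proof
    assume "lower_facet m d v F"
    then obtain S e where vf: "vf_facet m d v F" and D: "pair_decomp m G S e" and vS: "v \<in> S"
      unfolding lower_facet_def G_def by blast
    have par: "\<forall>w\<in>{1..m}-G. even (cnt G w) = (e \<noteq> m)" using decomp_par[OF D Gm vm(3)] .
    have dis: "\<forall>i\<in>S. \<forall>j\<in>S. i \<noteq> j \<longrightarrow> {i, Suc i} \<inter> {j, Suc j} = {}"
      and e: "e = 1 \<or> e = m" using D unfolding pair_decomp_def by auto
    have "\<forall>i\<in>S. v \<noteq> Suc i"
    proof
      fix i assume i: "i \<in> S"
      show "v \<noteq> Suc i"
      proof
        assume a: "v = Suc i"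
        have "{i, Suc i} \<inter> {v, Suc v} = {}" by (rule dis[rule_format]) (use i vS a in auto)
        then show False using a by simp
      qed
    qed
    then have c: "cnt G v = (if v < e then 1 else 0) + 1 + 2 * card {i\<in>S. v < i}"
      using decomp_count[OF D] vS by simp
    have "(v < e) = (e = m)" using e vm assms(1) by auto
    then have "even (cnt G v + 1) = (e \<noteq> m)" using c by simp
    then show "cyc_facet (vplus m v x y) (2*d+1) (insert y (real ` F))"
      using RY VF vf par by blast
  next
    assume "cyc_facet (vplus m v x y) (2*d+1) (insert y (real ` F))"
    then obtain P where cG: "card G = 2*d+1" and par: "\<forall>w\<in>{1..m} - G. even (cnt G w) = P"
      and pv: "even (cnt G v + 1) = P" using RY by blast
    have vf: "vf_facet m d v F" using VF cG par by blast
    have D: "pair_decomp m G {g\<in>G. g<m \<and> odd (cnt G g) = P} (if P then 1 else m)"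
      using construct[OF Gm _ _ par, of d] cG vm by simp
    have "v \<in> {g\<in>G. g<m \<and> odd (cnt G g) = P}" using vG vm pv by simp
    then show "lower_facet m d v F" unfolding lower_facet_def using vf D G_def by blast
  qed
  have U: "upper_facet m d v F \<longleftrightarrow> cyc_facet (vplus m v x y) (2*d+1) (insert x (real ` F))"
  proof
    assume "upper_facet m d v F"
    then obtain S e where vf: "vf_facet m d v F" and D: "pair_decomp m G S e" and vS: "v - 1 \<in> S"
      unfolding upper_facet_def G_def by blast
    have par: "\<forall>w\<in>{1..m}-G. even (cnt G w) = (e \<noteq> m)" using decomp_par[OF D Gm vm(3)] .
    have dis: "\<forall>i\<in>S. \<forall>j\<in>S. i \<noteq> j \<longrightarrow> {i, Suc i} \<inter> {j, Suc j} = {}"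
      and e: "e = 1 \<or> e = m" using D unfolding pair_decomp_def by auto
    have "\<forall>i\<in>S. v - 1 \<noteq> Suc i"
    proof
      fix i assume i: "i \<in> S"
      show "v - 1 \<noteq> Suc i"
      proof
        assume a: "v - 1 = Suc i"
        have "{i, Suc i} \<inter> {v - 1, Suc (v - 1)} = {}" by (rule dis[rule_format]) (use i vS a in auto)
        then show False using a by simp
      qed
    qed
    then have c: "cnt G (v - 1) = (if v - 1 < e then 1 else 0) + 1 + 2 * card {i\<in>S. v - 1 < i}"
      using decomp_count[OF D] vS by simp
    have sv: "Suc (v - 1) = v" using assms(1) by simp
    have "cnt G (v - 1) = cnt G v + 1" using cnt_step[OF fG, of "v - 1"] sv vG by simp
    moreover have "(v - 1 < e) = (e = m)" using e vm assms(1) by auto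
    ultimately have "even (cnt G v) = (e \<noteq> m)" using c by simp
    then show "cyc_facet (vplus m v x y) (2*d+1) (insert x (real ` F))"
      using RX VF vf par by blast
  next
    assume "cyc_facet (vplus m v x y) (2*d+1) (insert x (real ` F))"
    then obtain P where cG: "card G = 2*d+1" and par: "\<forall>w\<in>{1..m} - G. even (cnt G w) = P"
      and pv: "even (cnt G v) = P" using RX by blast
    have vf: "vf_facet m d v F" using VF cG par by blast
    have D: "pair_decomp m G {g\<in>G. g<m \<and> odd (cnt G g) = P} (if P then 1 else m)"
      using construct[OF Gm _ _ par, of d] cG vm by simp
    have sv: "Suc (v - 1) = v" using assms(1) by simp
    have cs: "cnt G (v - 1) = cnt G v + (if v \<in> G then 1 else 0)"
      using cnt_step[OF fG, of "v - 1"] sv by simp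
    have v1G: "v - 1 \<in> G"
    proof (rule ccontr)
      assume "v - 1 \<notin> G"
      then have "v - 1 \<in> {1..m} - G" using assms(1) vm by auto
      then have "even (cnt G (v - 1)) = P" using par by blast
      then show False using cs vG pv by simp
    qed
    have "v - 1 \<in> {g\<in>G. g<m \<and> odd (cnt G g) = P}" using v1G vm pv cs vG by auto
    then show "upper_facet m d v F" unfolding upper_facet_def using vf D G_def by blast
  qed
  show ?thesis using L U by blast
qed

end
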